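(* Let $G$ be a connected simple graph and let $e=uv\in E(G)$ be an edge that is not a bridge of $G$. Then $$\chi_{dom}(G)-1\leq \chi_{dom}(G-e)\leq \chi_{dom}(G)+2.$$
   Context: All graphs are finite and simple. A dominated coloring (dom-coloring) of a graph $H$ is a proper vertex coloring of $H$ such that for every color class $C$ there is a vertex $x\in V(H)$ adjacent to every vertex of $C$ (i.e. $C\subseteq N_H(x)$); we say $C$ is dominated by $x$. The dominated chromatic number $\chi_{dom}(H)$ is the minimum number of colors in a dominated coloring of $H$ (considered for graphs in which such a coloring exists). $G-e$ denotes the graph obtained from $G$ by deleting the edge $e$ (keeping all vertices). *)

theory Defs
  imports Main
begin

definition simple_graph :: "'a set \<Rightarrow> 'a set set \<Rightarrow> bool" where
  "simple_graph V E \<longleftrightarrow> finite V \<and> (\<forall>e\<in>E. \<exists>x y. e = {x, y} \<and> x \<noteq> y \<and> x \<in> V \<and> y \<in> V)"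

definition adj :: "'a set set \<Rightarrow> 'a \<Rightarrow> 'a \<Rightarrow> bool" where
  "adj E x y \<longleftrightarrow> {x, y} \<in> E"

definition reachable :: "'a set set \<Rightarrow> 'a \<Rightarrow> 'a \<Rightarrow> bool" where
  "reachable E x y \<longleftrightarrow> (adj E)\<^sup>*\<^sup>* x y"

definition connected_graph :: "'a set \<Rightarrow> 'a set set \<Rightarrow> bool" where
  "connected_graph V E \<longleftrightarrow> V \<noteq> {} \<and> (\<forall>x\<in>V. \<forall>y\<in>V. reachable E x y)"

definition is_bridge :: "'a set \<Rightarrow> 'a set set \<Rightarrow> 'a set \<Rightarrow> bool" where
  "is_bridge V E e \<longleftrightarrow> e \<in> E \<and>
     (\<exists>x\<in>V. \<exists>y\<in>V. reachable E x y \<and> \<not> reachable (E - {e}) x y)"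

definition dom_coloring :: "'a set \<Rightarrow> 'a set set \<Rightarrow> ('a \<Rightarrow> nat) \<Rightarrow> bool" where
  "dom_coloring V E c \<longleftrightarrow>
     (\<forall>x\<in>V. \<forall>y\<in>V. adj E x y \<longrightarrow> c x \<noteq> c y) \<and>
     (\<forall>i\<in>c ` V. \<exists>x\<in>V. \<forall>y\<in>V. c y = i \<longrightarrow> adj E x y)"

definition chi_dom :: "'a set \<Rightarrow> 'a set set \<Rightarrow> nat" where
  "chi_dom V E = (LEAST k. \<exists>c. dom_coloring V E c \<and> card (c ` V) = k)"

end

theory Submission
  imports Defs
begin

lemma chi_le: "dom_coloring V E c \<Longrightarrow> chi_dom V E \<le> card (c ` V)"
  unfolding chi_dom_def by (rule Least_le) blast

lemma chi_ex: "dom_coloring V E c \<Longrightarrow> \<exists>c. dom_coloring V E c \<and> card (c ` V) = chi_dom V E"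
  unfolding chi_dom_def by (rule LeastI_ex) blast

lemma adj_ne: "simple_graph V E \<Longrightarrow> adj E x y \<Longrightarrow> x \<noteq> y"
  unfolding simple_graph_def adj_def by (metis doubleton_eq_iff insert_absorb2)

lemma adj_in: "simple_graph V E \<Longrightarrow> adj E x y \<Longrightarrow> x \<in> V \<and> y \<in> V"
  unfolding simple_graph_def adj_def by (metis doubleton_eq_iff)

lemma adj_sym: "adj E x y \<Longrightarrow> adj E y x"
  unfolding adj_def by (simp add: insert_commute)

lemma first_step: "r\<^sup>*\<^sup>* x y \<Longrightarrow> x \<noteq> y \<Longrightarrow> \<exists>w. r x w"
  by (induction rule: converse_rtranclp_induct) auto

lemma lemA:
  assumes sg: "simple_graph V E" and e: "{u,v} \<in> E"
    and nb: "\<forall>y\<in>V. \<exists>x\<in>V. adj (E - {{u,v}}) x y"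
    and dc: "dom_coloring V E c"
  shows "\<exists>c'. dom_coloring V (E - {{u,v}}) c' \<and> card (c' ` V) \<le> card (c ` V) + 2"
proof -
  have fin: "finite V" using sg simple_graph_def by blast
  have uv: "u \<noteq> v" "u \<in> V" "v \<in> V" using adj_ne[OF sg] adj_in[OF sg] e unfolding adj_def by auto
  define N where "N = Suc (Max (c ` V))"
  have lt: "\<And>y. y \<in> V \<Longrightarrow> c y < N" using fin unfolding N_def
    by (simp add: le_imp_less_Suc)
  define c' where "c' y = (if y = u then N else if y = v then N+1 else c y)" for y
  have sub: "c' ` V \<subseteq> insert N (insert (N+1) (c ` V))" unfolding c'_def by auto
  have "card (c' ` V) \<le> card (insert N (insert (N+1) (c ` V)))"
    by (rule card_mono) (use fin sub in auto)
  also have "\<dots> \<le> card (c ` V) + 2"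
    by (metis (no_types, lifting) add_2_eq_Suc' card_insert_le_m1 diff_Suc_1 fin finite_imageI
        finite_insert le_SucI card_insert_if le_refl)
  finally have card: "card (c' ` V) \<le> card (c ` V) + 2" .
  have proper: "\<forall>x\<in>V. \<forall>y\<in>V. adj (E - {{u,v}}) x y \<longrightarrow> c' x \<noteq> c' y"
  proof (intro ballI impI)
    fix x y assume xy: "x \<in> V" "y \<in> V" "adj (E - {{u,v}}) x y"
    hence a: "adj E x y" "{x,y} \<noteq> {u,v}" unfolding adj_def by auto
    have "x \<noteq> y" using adj_ne[OF sg a(1)] .
    moreover have "c x \<noteq> c y" using dc xy a unfolding dom_coloring_def by blast
    ultimately show "c' x \<noteq> c' y" using a(2) lt[OF xy(1)] lt[OF xy(2)] unfolding c'_def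
      by (auto simp: insert_commute)
  qed
  have domn: "\<forall>i\<in>c' ` V. \<exists>x\<in>V. \<forall>y\<in>V. c' y = i \<longrightarrow> adj (E - {{u,v}}) x y"
  proof
    fix i assume "i \<in> c' ` V"
    then obtain z where z: "z \<in> V" "i = c' z" by auto
    show "\<exists>x\<in>V. \<forall>y\<in>V. c' y = i \<longrightarrow> adj (E - {{u,v}}) x y"
    proof (cases "z = u \<or> z = v")
      case True
      obtain x where x: "x \<in> V" "adj (E - {{u,v}}) x z" using nb z(1) by blast
      have "\<forall>y\<in>V. c' y = i \<longrightarrow> y = z"
        proof (intro ballI impI)
        fix y assume y: "y \<in> V" "c' y = i"
        show "y = z"
        proof (rule ccontr)
          assume "y \<noteq> z"
          then show False using True z y lt[OF y(1)] uv unfolding c'_def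
            by (cases "y = u"; cases "y = v") auto
        qed
      qed
      then show ?thesis using x by blast
    next
      case False
      hence ci: "i = c z" using z unfolding c'_def by auto
      obtain x where x: "x \<in> V" "\<forall>y\<in>V. c y = i \<longrightarrow> adj E x y"
        using dc z(1) ci unfolding dom_coloring_def by blast
      have "\<forall>y\<in>V. c' y = i \<longrightarrow> adj (E - {{u,v}}) x y"
      proof (intro ballI impI)
        fix y assume y: "y \<in> V" "c' y = i"
        have yn: "y \<noteq> u" "y \<noteq> v" using y lt[OF z(1)] ci unfolding c'_def by (auto split: if_splits)
        hence "c y = i" using y unfolding c'_def by auto
        hence "adj E x y" using x y by blast
        moreover have "{x,y} \<noteq> {u,v}" using yn by (auto simp: doubleton_eq_iff)
        ultimately show "adj (E - {{u,v}}) x y" unfolding adj_def by auto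
      qed
      then show ?thesis using x(1) by blast
    qed
  qed
  show ?thesis using proper domn card unfolding dom_coloring_def by blast
qed

lemma lemB:
  assumes sg: "simple_graph V E" and e: "{u,v} \<in> E"
    and dc: "dom_coloring V (E - {{u,v}}) c"
  shows "\<exists>c'. dom_coloring V E c' \<and> card (c' ` V) \<le> card (c ` V) + 1"
proof -
  have fin: "finite V" using sg simple_graph_def by blast
  have uv: "u \<noteq> v" "u \<in> V" "v \<in> V" using adj_ne[OF sg] adj_in[OF sg] e unfolding adj_def by auto
  define N where "N = Suc (Max (c ` V))"
  have lt: "\<And>y. y \<in> V \<Longrightarrow> c y < N" using fin unfolding N_def
    by (simp add: le_imp_less_Suc)
  define c' where "c' y = (if y = u then N else c y)" for y
  have sub: "c' ` V \<subseteq> insert N (c ` V)" unfolding c'_def by auto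
  have "card (c' ` V) \<le> card (insert N (c ` V))"
    by (rule card_mono) (use fin sub in auto)
  also have "\<dots> \<le> card (c ` V) + 1"
    by (simp add: card_insert_le_m1 card_insert_if fin)
  finally have card: "card (c' ` V) \<le> card (c ` V) + 1" .
  have proper: "\<forall>x\<in>V. \<forall>y\<in>V. adj E x y \<longrightarrow> c' x \<noteq> c' y"
  proof (intro ballI impI)
    fix x y assume xy: "x \<in> V" "y \<in> V" "adj E x y"
    have ne: "x \<noteq> y" using adj_ne[OF sg xy(3)] .
    show "c' x \<noteq> c' y"
    proof (cases "x = u \<or> y = u")
      case True
      then show ?thesis using ne lt[OF xy(1)] lt[OF xy(2)] unfolding c'_def by auto
    next
      case False
      hence "{x,y} \<noteq> {u,v}" by (auto simp: doubleton_eq_iff)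
      hence "adj (E - {{u,v}}) x y" using xy(3) unfolding adj_def by auto
      hence "c x \<noteq> c y" using dc xy unfolding dom_coloring_def by blast
      then show ?thesis using False unfolding c'_def by auto
    qed
  qed
  have domn: "\<forall>i\<in>c' ` V. \<exists>x\<in>V. \<forall>y\<in>V. c' y = i \<longrightarrow> adj E x y"
  proof
    fix i assume "i \<in> c' ` V"
    then obtain z where z: "z \<in> V" "i = c' z" by auto
    show "\<exists>x\<in>V. \<forall>y\<in>V. c' y = i \<longrightarrow> adj E x y"
    proof (cases "z = u")
      case True
      have "\<forall>y\<in>V. c' y = i \<longrightarrow> y = u"
        using True z lt unfolding c'_def by (auto split: if_splits)
      moreover have "adj E v u" using e unfolding adj_def by (simp add: insert_commute)
      ultimately show ?thesis using uv by blast
    next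
      case False
      hence ci: "i = c z" using z unfolding c'_def by auto
      obtain x where x: "x \<in> V" "\<forall>y\<in>V. c y = i \<longrightarrow> adj (E - {{u,v}}) x y"
        using dc z(1) ci unfolding dom_coloring_def by blast
      have "\<forall>y\<in>V. c' y = i \<longrightarrow> adj E x y"
      proof (intro ballI impI)
        fix y assume y: "y \<in> V" "c' y = i"
        have "y \<noteq> u" using y lt[OF z(1)] ci unfolding c'_def by (auto split: if_splits)
        hence "c y = i" using y unfolding c'_def by auto
        thus "adj E x y" using x y unfolding adj_def by blast
      qed
      then show ?thesis using x(1) by blast
    qed
  qed
  show ?thesis using proper domn card unfolding dom_coloring_def by blast
qed

theorem theorem2p1:
  fixes V :: "'a set" and E :: "'a set set" and u v :: 'a
  assumes "simple_graph V E"
    and "connected_graph V E"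
    and "{u, v} \<in> E"
    and "\<not> is_bridge V E {u, v}"
  shows "chi_dom V E - 1 \<le> chi_dom V (E - {{u, v}})
       \<and> chi_dom V (E - {{u, v}}) \<le> chi_dom V E + 2"
proof -
  note sg = assms(1)
  define E' where "E' = E - {{u,v}}"
  have fin: "finite V" using sg simple_graph_def by blast
  have uv: "u \<noteq> v" "u \<in> V" "v \<in> V" using adj_ne[OF sg] adj_in[OF sg] assms(3) unfolding adj_def by auto
  have reach: "\<forall>x\<in>V. \<forall>y\<in>V. reachable E' x y"
    using assms(2,3,4) unfolding connected_graph_def is_bridge_def E'_def by blast
  have sg': "simple_graph V E'" using sg unfolding simple_graph_def E'_def by blast
  have nb: "\<forall>y\<in>V. \<exists>x\<in>V. adj E' x y"
  proof
    fix y assume y: "y \<in> V"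
    obtain z where z: "z \<in> V" "z \<noteq> y" using uv by metis
    have "reachable E' y z" using reach y z by blast
    then obtain w where "adj E' y w" unfolding reachable_def using first_step z(2) by metis
    then show "\<exists>x\<in>V. adj E' x y" using adj_sym adj_in[OF sg'] by metis
  qed
  obtain f n where f: "f ` V = {i::nat. i < n}" "inj_on f V"
    using finite_imp_inj_to_nat_seg[OF fin] by blast
  have d0: "dom_coloring V E' f"
    unfolding dom_coloring_def
  proof (intro conjI ballI impI)
    fix x y assume "x \<in> V" "y \<in> V" "adj E' x y"
    then show "f x \<noteq> f y" using adj_ne[OF sg'] f(2) by (metis inj_onD)
  next
    fix i assume "i \<in> f ` V"
    then obtain z where z: "z \<in> V" "i = f z" by auto
    obtain x where x: "x \<in> V" "adj E' x z" using nb z(1) by blast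
    have "\<forall>y\<in>V. f y = i \<longrightarrow> adj E' x y" using x z f(2) by (metis inj_onD)
    then show "\<exists>x\<in>V. \<forall>y\<in>V. f y = i \<longrightarrow> adj E' x y" using x(1) by blast
  qed
  obtain c' where c': "dom_coloring V E' c'" "card (c' ` V) = chi_dom V E'"
    using chi_ex[OF d0] by blast
  obtain c where c: "dom_coloring V E c" "card (c ` V) \<le> chi_dom V E' + 1"
    using lemB[OF sg assms(3) c'(1)[unfolded E'_def]] c'(2) by auto
  have 1: "chi_dom V E \<le> chi_dom V E' + 1" using chi_le[OF c(1)] c(2) by linarith
  obtain c2 where c2: "dom_coloring V E c2" "card (c2 ` V) = chi_dom V E"
    using chi_ex[OF c(1)] by blast
  obtain c3 where c3: "dom_coloring V E' c3" "card (c3 ` V) \<le> chi_dom V E + 2"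
    using lemA[OF sg assms(3) nb[unfolded E'_def] c2(1)] c2(2) unfolding E'_def by auto
  have 2: "chi_dom V E' \<le> chi_dom V E + 2" using chi_le[OF c3(1)] c3(2) by linarith
  show ?thesis using 1 2 unfolding E'_def by linarith
qed

end
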